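(* Let $f$ be a smooth probability density with respect to $\gamma$ on $\mathbb{R}^n$ such that $\int x f\,d\gamma=0$, $\int|x|^2f\,d\gamma<\infty$ and $\mathrm{I}(f)<\infty$. Then $$\lim_{t\to\infty}e^{2t}\,\mathrm{I}(P_tf)=0.$$
   Context: $\gamma$ is the standard Gaussian measure on $\mathbb{R}^n$, $\mathrm{I}(g)=\int\frac{|\nabla g|^2}{g}d\gamma$, and $P_tg(x)=\int_{\mathbb{R}^n} g(e^{-t}x+\sqrt{1-e^{-2t}}\,y)\,d\gamma(y)$ is the Ornstein–Uhlenbeck semigroup. *)

theory Defs
  imports "HOL-Analysis.Analysis"
begin

definition gauss_dens :: "'a::euclidean_space \<Rightarrow> real" where
  "gauss_dens x = (2 * pi) powr (- real DIM('a) / 2) * exp (- ((norm x)\<^sup>2) / 2)"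

definition std_gaussian :: "'a::euclidean_space measure" where
  "std_gaussian = density lborel (\<lambda>x. ennreal (gauss_dens x))"

definition grad :: "('a::euclidean_space \<Rightarrow> real) \<Rightarrow> 'a \<Rightarrow> 'a" where
  "grad g x = (\<Sum>b\<in>Basis. frechet_derivative g (at x) b *\<^sub>R b)"

fun Ck :: "nat \<Rightarrow> ('a::euclidean_space \<Rightarrow> real) \<Rightarrow> bool" where
  "Ck 0 g = continuous_on UNIV g"
| "Ck (Suc k) g = (continuous_on UNIV g \<and> (\<forall>x. g differentiable (at x)) \<and>
      (\<forall>b\<in>Basis. Ck k (\<lambda>x. frechet_derivative g (at x) b)))"

definition smooth_fun :: "('a::euclidean_space \<Rightarrow> real) \<Rightarrow> bool" where
  "smooth_fun g \<longleftrightarrow> (\<forall>k. Ck k g)"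

text \<open>Fisher information I(g) = int |grad g|^2 / g d gamma, as an extended nonnegative
  real (value infinity allowed); where g = 0 the integrand is 0 (convention x/0 = 0).\<close>
definition fisher :: "('a::euclidean_space \<Rightarrow> real) \<Rightarrow> ennreal" where
  "fisher g = (\<integral>\<^sup>+ x. ennreal ((norm (grad g x))\<^sup>2 / g x) \<partial>std_gaussian)"

definition OU :: "real \<Rightarrow> ('a::euclidean_space \<Rightarrow> real) \<Rightarrow> 'a \<Rightarrow> real" where
  "OU t g x = (\<integral>y. g (exp (- t) *\<^sub>R x + sqrt (1 - exp (- 2 * t)) *\<^sub>R y) \<partial>std_gaussian)"

end

theory Submission
  imports Defs "HOL-Probability.Distributions"
begin


lemma sets_std_gaussian[measurable_cong]: "sets std_gaussian = sets borel"
  by (simp add: std_gaussian_def)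

lemma gauss_dens_prod: "gauss_dens (x::'a::euclidean_space) = (\<Prod>b\<in>Basis. std_normal_density (x \<bullet> b))"
proof -
  have n: "(norm x)\<^sup>2 = (\<Sum>b\<in>Basis. (x \<bullet> b)^2)"
    unfolding power2_norm_eq_inner by (subst euclidean_inner) (simp add: power2_eq_square)
  have a: "(2 * pi) powr (- real DIM('a) / 2) = (\<Prod>b\<in>(Basis::'a set). 1 / sqrt (2 * pi))"
  proof -
    have "(2 * pi) powr (- real DIM('a) / 2) = ((2*pi) powr (-1/2)) ^ DIM('a)"
      by (subst powr_realpow[symmetric]) (auto simp: powr_powr)
    also have "(2*pi) powr (-1/2) = 1 / sqrt (2*pi)"
      by (simp add: powr_minus_divide powr_half_sqrt)
    finally show ?thesis by simp
  qed
  have b: "exp (- ((norm x)\<^sup>2) / 2) = (\<Prod>b\<in>Basis. exp (- ((x \<bullet> b)^2) / 2))"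
    unfolding n by (simp add: exp_sum[symmetric] sum_divide_distrib[symmetric] sum_negf)
  show ?thesis
    unfolding gauss_dens_def std_normal_density_def prod.distrib a b ..
qed

lemma gauss_dens_nonneg[simp]: "0 \<le> gauss_dens x"
  by (simp add: gauss_dens_def)

lemma gauss_dens_measurable[measurable]: "gauss_dens \<in> borel_measurable borel"
  unfolding gauss_dens_def by measurable

lemma nn_std_normal: "(\<integral>\<^sup>+x. ennreal (std_normal_density x) \<partial>lborel) = 1"
  by (subst nn_integral_eq_integral) auto

lemma nn_std_normal2: "(\<integral>\<^sup>+x. ennreal (std_normal_density x * x^2) \<partial>lborel) = 1"
proof -
  have "(\<integral>x. std_normal_density x * x^2 \<partial>lborel) = 1"
    using integral_std_normal_moment_even[of 1] by simp
  then show ?thesis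
    by (subst nn_integral_eq_integral) (auto intro: integrable_std_normal_moment)
qed

lemma emeasure_std_gaussian_UNIV: "emeasure (std_gaussian::'a::euclidean_space measure) UNIV = 1"
proof -
  have "emeasure (std_gaussian::'a measure) UNIV = (\<integral>\<^sup>+x. ennreal (gauss_dens (x::'a)) \<partial>lborel)"
    unfolding std_gaussian_def by (subst emeasure_density) auto
  also have "\<dots> = (\<integral>\<^sup>+x. ennreal (\<Prod>b\<in>Basis. std_normal_density ((x::'a) \<bullet> b)) \<partial>lborel)"
    by (simp add: gauss_dens_prod)
  also have "\<dots> = (\<integral>\<^sup>+x. (\<Prod>b\<in>Basis. ennreal (std_normal_density ((x::'a) \<bullet> b))) \<partial>lborel)"
    by (simp add: prod_ennreal)
  also have "\<dots> = (\<Prod>b\<in>(Basis::'a set). (\<integral>\<^sup>+x. ennreal (std_normal_density x) \<partial>lborel))"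
    by (rule nn_integral_lborel_prod) auto
  finally show ?thesis by (simp add: nn_std_normal)
qed

lemma space_std_gaussian[simp]: "space std_gaussian = UNIV"
  by (simp add: std_gaussian_def)

lemma prob_space_std_gaussian: "prob_space std_gaussian"
  by (rule prob_spaceI) (simp add: emeasure_std_gaussian_UNIV)

definition hh :: "'a \<Rightarrow> 'a \<Rightarrow> real \<Rightarrow> real" where
  "hh c b x = (if b = c then std_normal_density x * x^2 else std_normal_density x)"

lemma hh_measurable[measurable]: "hh c b \<in> borel_measurable borel"
  unfolding hh_def by measurable

lemma hh_nonneg[simp]: "0 \<le> hh c b x"
  unfolding hh_def by auto

lemma nn_gauss_second: "(\<integral>\<^sup>+y. ennreal ((norm y)^2) \<partial>(std_gaussian::'a::euclidean_space measure)) = of_nat DIM('a)"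
proof -
  have "(\<integral>\<^sup>+y. ennreal ((norm y)^2) \<partial>(std_gaussian::'a measure)) =
      (\<integral>\<^sup>+y. ennreal (gauss_dens y) * ennreal ((norm (y::'a))^2) \<partial>lborel)"
    unfolding std_gaussian_def by (subst nn_integral_density) auto
  also have "\<dots> = (\<integral>\<^sup>+y. (\<Sum>c\<in>Basis. ennreal (\<Prod>b\<in>Basis. hh c b ((y::'a) \<bullet> b))) \<partial>lborel)"
  proof (intro nn_integral_cong)
    fix y :: 'a
    have "gauss_dens y * (norm y)^2 = (\<Sum>c\<in>Basis. (\<Prod>b\<in>Basis. std_normal_density (y \<bullet> b)) * (y \<bullet> c)^2)"
      by (simp add: gauss_dens_prod sum_distrib_left power2_norm_eq_inner)
         (subst euclidean_inner, simp add: power2_eq_square sum_distrib_left)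
    also have "\<dots> = (\<Sum>c\<in>Basis. (\<Prod>b\<in>Basis. hh c b (y \<bullet> b)))"
    proof (intro sum.cong refl)
      fix c :: 'a assume c: "c \<in> Basis"
      have "(\<Prod>b\<in>Basis. hh c b (y \<bullet> b))
          = (\<Prod>b\<in>Basis. std_normal_density (y \<bullet> b) * (if b = c then (y \<bullet> b)^2 else 1))"
        by (intro prod.cong) (auto simp: hh_def)
      also have "\<dots> = (\<Prod>b\<in>Basis. std_normal_density (y \<bullet> b)) * (y \<bullet> c)^2"
        using c by (simp add: prod.distrib prod.delta)
      finally show "(\<Prod>b\<in>Basis. std_normal_density (y \<bullet> b)) * (y \<bullet> c)^2 = (\<Prod>b\<in>Basis. hh c b (y \<bullet> b))" by simp
    qed
    finally show "ennreal (gauss_dens y) * ennreal ((norm y)^2) = (\<Sum>c\<in>Basis. ennreal (\<Prod>b\<in>Basis. hh c b (y \<bullet> b)))"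
      by (simp add: ennreal_mult'[symmetric] prod_nonneg)
  qed
  also have "\<dots> = (\<Sum>c\<in>(Basis::'a set). (\<integral>\<^sup>+y. ennreal (\<Prod>b\<in>Basis. hh c b ((y::'a) \<bullet> b)) \<partial>lborel))"
    by (rule nn_integral_sum) auto
  also have "\<dots> = (\<Sum>c\<in>(Basis::'a set). 1)"
  proof (intro sum.cong refl)
    fix c :: 'a assume c: "c \<in> Basis"
    have "(\<integral>\<^sup>+y. ennreal (\<Prod>b\<in>Basis. hh c b ((y::'a) \<bullet> b)) \<partial>lborel)
      = (\<integral>\<^sup>+y. (\<Prod>b\<in>Basis. ennreal (hh c b ((y::'a) \<bullet> b))) \<partial>lborel)"
      by (intro nn_integral_cong) (simp add: prod_ennreal)
    also have "\<dots> = (\<Prod>b\<in>(Basis::'a set). (\<integral>\<^sup>+x. ennreal (hh c b x) \<partial>lborel))"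
      by (rule nn_integral_lborel_prod) auto
    also have "\<dots> = 1"
      by (intro prod.neutral ballI, rename_tac b, case_tac "b = c") (simp_all add: nn_std_normal nn_std_normal2 hh_def)
    finally show "(\<integral>\<^sup>+y. ennreal (\<Prod>b\<in>Basis. hh c b ((y::'a) \<bullet> b)) \<partial>lborel) = 1" .
  qed
  finally show ?thesis by simp
qed


definition mk :: "real \<Rightarrow> 'a::euclidean_space \<Rightarrow> 'a \<Rightarrow> real" where
  "mk r x z = (1 - r^2) powr (- real DIM('a) / 2) *
     exp ((2*r*(x \<bullet> z) - r^2*((norm x)^2 + (norm z)^2)) / (2*(1-r^2)))"

lemma mk_nonneg[simp]: "0 \<le> mk r x z"
  by (simp add: mk_def)

lemma mk_pos: "r^2 < 1 \<Longrightarrow> 0 < mk r x z"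
  by (simp add: mk_def)

lemma mk_sym: "mk r x z = mk r z x"
  by (simp add: mk_def inner_commute add.commute)

lemma mk_measurable[measurable]: "(\<lambda>(x, z). mk r x z) \<in> borel_measurable (borel \<Otimes>\<^sub>M borel)"
  unfolding mk_def by measurable

lemma mk_id:
  fixes x z :: "'a::euclidean_space"
  assumes r: "0 < r" "r < 1"
  shows "(1-r^2) powr (- real DIM('a) / 2) * gauss_dens ((1/sqrt(1-r^2)) *\<^sub>R (z - r *\<^sub>R x))
      = gauss_dens z * mk r x z"
proof -
  have s2: "0 < 1 - r^2" using r by (simp add: power_less_one_iff abs_square_less_1)
  have "(norm ((1/sqrt(1-r^2)) *\<^sub>R (z - r *\<^sub>R x)))^2 = (norm (z - r *\<^sub>R x))^2 / (1 - r^2)"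
    using s2 by (simp add: power_mult_distrib power_divide)
  also have "(norm (z - r *\<^sub>R x))^2 = (norm z)^2 - 2*r*(x \<bullet> z) + r^2 * (norm x)^2"
    by (simp only: power2_norm_eq_inner) (simp add: inner_diff_left inner_diff_right inner_commute algebra_simps power2_eq_square)
  finally have e: "(norm ((1/sqrt(1-r^2)) *\<^sub>R (z - r *\<^sub>R x)))^2 = ((norm z)^2 - 2*r*(x \<bullet> z) + r^2 * (norm x)^2) / (1 - r^2)" .
  have ex: "- (((norm z)^2 - 2*r*(x \<bullet> z) + r^2 * (norm x)^2) / (1 - r^2)) / 2
      = - ((norm z)^2) / 2 + (2*r*(x \<bullet> z) - r^2*((norm x)^2 + (norm z)^2)) / (2*(1-r^2))"
    using s2 by (simp add: field_simps)
  show ?thesis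
    unfolding gauss_dens_def mk_def e ex exp_add by simp
qed

lemma mehler_nn:
  fixes x :: "'a::euclidean_space" and H :: "'a \<Rightarrow> ennreal"
  assumes r: "0 < r" "r < 1" and H[measurable]: "H \<in> borel_measurable borel"
  shows "(\<integral>\<^sup>+y. H (r *\<^sub>R x + sqrt(1-r^2) *\<^sub>R y) \<partial>std_gaussian) = (\<integral>\<^sup>+z. ennreal (mk r x z) * H z \<partial>std_gaussian)"
proof -
  have s2: "0 < 1 - r^2" using r by (simp add: power_less_one_iff abs_square_less_1)
  define s where "s = sqrt (1 - r^2)"
  have s: "0 < s" using s2 by (simp add: s_def)
  define Q where "Q z = ennreal ((1-r^2) powr (- real DIM('a) / 2) * gauss_dens ((1/s) *\<^sub>R (z - r *\<^sub>R x))) * H z" for z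
  have Q[measurable]: "Q \<in> borel_measurable borel" unfolding Q_def by measurable
  have sn: "\<bar>s\<bar> ^ DIM('a) * (1-r^2) powr (- real DIM('a) / 2) = 1"
  proof -
    have "\<bar>s\<bar> ^ DIM('a) = (1-r^2) powr (real DIM('a) / 2)"
      using s2 s by (simp add: s_def powr_half_sqrt[symmetric] powr_realpow[symmetric] powr_powr)
    then show ?thesis using s2 by (simp add: powr_add[symmetric])
  qed
  have "(\<integral>\<^sup>+y. H (r *\<^sub>R x + s *\<^sub>R y) \<partial>std_gaussian) = (\<integral>\<^sup>+y. ennreal (gauss_dens y) * H (r *\<^sub>R x + s *\<^sub>R y) \<partial>lborel)"
    unfolding std_gaussian_def by (subst nn_integral_density) auto
  also have "\<dots> = (\<integral>\<^sup>+y. ennreal (\<bar>s\<bar> ^ DIM('a)) * Q (r *\<^sub>R x + s *\<^sub>R y) \<partial>lborel)"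
  proof (intro nn_integral_cong)
    fix y :: 'a
    have "(1/s) *\<^sub>R (r *\<^sub>R x + s *\<^sub>R y - r *\<^sub>R x) = y" using s by simp
    then show "ennreal (gauss_dens y) * H (r *\<^sub>R x + s *\<^sub>R y) = ennreal (\<bar>s\<bar> ^ DIM('a)) * Q (r *\<^sub>R x + s *\<^sub>R y)"
      unfolding Q_def using sn
      by (simp add: mult.assoc[symmetric] ennreal_mult'[symmetric] powr_nonneg_iff)
  qed
  also have "\<dots> = (\<integral>\<^sup>+z. Q z \<partial>lborel)"
    by (subst lborel_affine[of s "r *\<^sub>R x"]) (use s in \<open>simp_all add: nn_integral_density nn_integral_distr\<close>)
  also have "\<dots> = (\<integral>\<^sup>+z. ennreal (gauss_dens z) * (ennreal (mk r x z) * H z) \<partial>lborel)"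
    unfolding Q_def s_def using mk_id[OF r, of z x for z]
    by (intro nn_integral_cong) (simp add: mult.assoc ennreal_mult)
  also have "\<dots> = (\<integral>\<^sup>+z. ennreal (mk r x z) * H z \<partial>std_gaussian)"
    unfolding std_gaussian_def by (subst nn_integral_density) auto
  finally show ?thesis by (simp add: s_def)
qed


lemma mk_bound:
  fixes x z :: "'a::euclidean_space"
  assumes r: "r^2 < 1"
  shows "mk r x z \<le> (1-r^2) powr (- real DIM('a) / 2) * exp ((norm x)^2 / 2)"
proof -
  have s2: "0 < 1 - r^2" using r by simp
  have "0 \<le> (norm (x - r *\<^sub>R z))^2" by simp
  also have "(norm (x - r *\<^sub>R z))^2 = (norm x)^2 - 2*r*(x \<bullet> z) + r^2 * (norm z)^2"
    by (simp only: power2_norm_eq_inner) (simp add: inner_diff_left inner_diff_right inner_commute algebra_simps power2_eq_square)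
  finally have "(2*r*(x \<bullet> z) - r^2*((norm x)^2 + (norm z)^2)) / (2*(1-r^2)) \<le> (norm x)^2 / 2"
    using s2 by (simp add: field_simps)
  then show ?thesis unfolding mk_def by (intro mult_left_mono) auto
qed

locale fctx =
  fixes f :: "'a::euclidean_space \<Rightarrow> real"
  assumes f_meas[measurable]: "f \<in> borel_measurable borel"
    and f_nonneg: "\<And>x. 0 \<le> f x"
    and f_int: "integrable std_gaussian f"
    and f_one: "(\<integral>x. f x \<partial>std_gaussian) = 1"
    and f_mean_int: "integrable std_gaussian (\<lambda>x. f x *\<^sub>R x)"
    and f_mean: "(\<integral>x. f x *\<^sub>R x \<partial>std_gaussian) = 0"
    and f_sec: "integrable std_gaussian (\<lambda>x. (norm x)^2 * f x)"
begin

definition A :: "real \<Rightarrow> 'a \<Rightarrow> real" where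
  "A r x = (\<integral>z. f z * mk r x z \<partial>std_gaussian)"
definition Bv :: "real \<Rightarrow> 'a \<Rightarrow> 'a" where
  "Bv r x = (\<integral>z. (f z * mk r x z) *\<^sub>R (z - r *\<^sub>R x) \<partial>std_gaussian)"
definition Cq :: "real \<Rightarrow> 'a \<Rightarrow> real" where
  "Cq r x = (\<integral>z. f z * mk r x z * (norm (z - r *\<^sub>R x))^2 \<partial>std_gaussian)"

lemma fdom_int: "integrable std_gaussian (\<lambda>z. f z * (1 + (norm z)^2))"
  using f_int f_sec by (simp add: algebra_simps)

lemma fabs_int: "integrable std_gaussian (\<lambda>z. f z * norm z)"
  using integrable_norm[OF f_mean_int] by (simp add: f_nonneg)

lemma int_A: assumes r: "r^2 < 1" shows "integrable std_gaussian (\<lambda>z. f z * mk r x z)"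
proof (rule Bochner_Integration.integrable_bound)
  let ?K = "(1-r^2) powr (- real DIM('a) / 2) * exp ((norm x)^2 / 2)"
  show "integrable std_gaussian (\<lambda>z. ?K * f z)" using f_int by simp
  show "AE z in std_gaussian. norm (f z * mk r x z) \<le> norm (?K * f z)"
    using mk_bound[OF r, of x] f_nonneg by (auto intro!: mult_left_mono simp: mult.commute)
qed measurable

lemma int_B: assumes r: "r^2 < 1" "\<bar>r\<bar> \<le> 1" shows "integrable std_gaussian (\<lambda>z. (f z * mk r x z) *\<^sub>R (z - r *\<^sub>R x))"
proof (rule Bochner_Integration.integrable_bound)
  let ?K = "(1-r^2) powr (- real DIM('a) / 2) * exp ((norm x)^2 / 2)"
  show "integrable std_gaussian (\<lambda>z. ?K * (f z * norm z + norm x * f z))" using f_int fabs_int by simp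
  show "AE z in std_gaussian. norm ((f z * mk r x z) *\<^sub>R (z - r *\<^sub>R x)) \<le> norm (?K * (f z * norm z + norm x * f z))"
  proof (intro AE_I2)
    fix z
    have n: "norm (z - r *\<^sub>R x) \<le> norm z + norm x"
    proof -
      have "\<bar>r\<bar> * norm x \<le> norm x" using r(2) by (intro mult_left_le_one_le) auto
      moreover have "norm (z - r *\<^sub>R x) \<le> norm z + \<bar>r\<bar> * norm x" using norm_triangle_ineq4[of z "r *\<^sub>R x"] by simp
      ultimately show ?thesis by linarith
    qed
    have "norm ((f z * mk r x z) *\<^sub>R (z - r *\<^sub>R x)) = f z * mk r x z * norm (z - r *\<^sub>R x)"
      using f_nonneg by simp
    also have "\<dots> \<le> f z * ?K * (norm z + norm x)"
      using mk_bound[OF r(1), of x z] f_nonneg n by (intro mult_mono mult_left_mono) auto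
    finally show "norm ((f z * mk r x z) *\<^sub>R (z - r *\<^sub>R x)) \<le> norm (?K * (f z * norm z + norm x * f z))"
      using f_nonneg by (simp add: algebra_simps)
  qed
qed measurable

lemma int_C: assumes r: "r^2 < 1" "\<bar>r\<bar> \<le> 1" shows "integrable std_gaussian (\<lambda>z. f z * mk r x z * (norm (z - r *\<^sub>R x))^2)"
proof (rule Bochner_Integration.integrable_bound)
  let ?K = "(1-r^2) powr (- real DIM('a) / 2) * exp ((norm x)^2 / 2)"
  show "integrable std_gaussian (\<lambda>z. ?K * (2 * ((norm z)^2 * f z) + 2 * (norm x)^2 * f z))" using f_int f_sec by simp
  show "AE z in std_gaussian. norm (f z * mk r x z * (norm (z - r *\<^sub>R x))^2) \<le> norm (?K * (2 * ((norm z)^2 * f z) + 2 * (norm x)^2 * f z))"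
  proof (intro AE_I2)
    fix z
    have n: "norm (z - r *\<^sub>R x) \<le> norm z + norm x"
    proof -
      have "\<bar>r\<bar> * norm x \<le> norm x" using r(2) by (intro mult_left_le_one_le) auto
      moreover have "norm (z - r *\<^sub>R x) \<le> norm z + \<bar>r\<bar> * norm x" using norm_triangle_ineq4[of z "r *\<^sub>R x"] by simp
      ultimately show ?thesis by linarith
    qed
    have n2: "(norm (z - r *\<^sub>R x))^2 \<le> 2 * (norm z)^2 + 2 * (norm x)^2"
    proof -
      have "(norm (z - r *\<^sub>R x))^2 \<le> (norm z + norm x)^2" using n by (intro power_mono) auto
      also have "\<dots> \<le> 2 * (norm z)^2 + 2 * (norm x)^2"
        using power2_sum[of "norm z" "norm x"] power2_diff[of "norm z" "norm x"] zero_le_power2[of "norm z - norm x"] by linarith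
      finally show ?thesis .
    qed
    have "norm (f z * mk r x z * (norm (z - r *\<^sub>R x))^2) = f z * mk r x z * (norm (z - r *\<^sub>R x))^2"
      using f_nonneg by simp
    also have "\<dots> \<le> f z * ?K * (2 * (norm z)^2 + 2 * (norm x)^2)"
      using mk_bound[OF r(1), of x z] f_nonneg n2 by (intro mult_mono mult_left_mono) auto
    finally show "norm (f z * mk r x z * (norm (z - r *\<^sub>R x))^2) \<le> norm (?K * (2 * ((norm z)^2 * f z) + 2 * (norm x)^2 * f z))"
      using f_nonneg by (simp add: algebra_simps)
  qed
qed measurable

lemma OU_eq:
  assumes t: "0 < t"
  shows "OU t f x = A (exp (-t)) x"
proof -
  define r where "r = exp (-t)"
  have r: "0 < r" "r < 1" using t by (auto simp: r_def)
  have e2: "exp (- 2 * t) = r^2" by (simp add: r_def power2_eq_square exp_add[symmetric])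
  have "OU t f x = (\<integral>y. f (r *\<^sub>R x + sqrt (1 - r^2) *\<^sub>R y) \<partial>std_gaussian)"
    unfolding OU_def e2 r_def ..
  also have "\<dots> = enn2real (\<integral>\<^sup>+y. ennreal (f (r *\<^sub>R x + sqrt (1 - r^2) *\<^sub>R y)) \<partial>std_gaussian)"
    by (rule integral_eq_nn_integral) (auto simp: f_nonneg)
  also have "\<dots> = enn2real (\<integral>\<^sup>+z. ennreal (mk r x z) * ennreal (f z) \<partial>std_gaussian)"
    by (subst mehler_nn[OF r]) auto
  also have "\<dots> = enn2real (\<integral>\<^sup>+z. ennreal (f z * mk r x z) \<partial>std_gaussian)"
    by (simp add: ennreal_mult[symmetric] f_nonneg mult.commute)
  also have "\<dots> = A r x"
    unfolding A_def by (rule integral_eq_nn_integral[symmetric]) (auto simp: f_nonneg)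
  finally show ?thesis by (simp add: r_def)
qed

end


lemma exp_rem: "\<bar>exp (u::real) - 1 - u\<bar> \<le> u^2 * exp \<bar>u\<bar>"
proof -
  obtain t where t: "\<bar>t\<bar> \<le> \<bar>u\<bar>" "exp u = (\<Sum>m<2. u ^ m / fact m) + exp t / fact 2 * u ^ 2"
    using Maclaurin_exp_le[of u 2] by blast
  have e: "exp u - 1 - u = exp t / 2 * u^2" using t(2) by (simp add: numeral_2_eq_2)
  have "exp t \<le> exp \<bar>u\<bar>" using t(1) by simp
  then have h1: "exp t * u^2 \<le> exp \<bar>u\<bar> * u^2" by (rule mult_right_mono) simp
  have h2: "0 \<le> exp \<bar>u\<bar> * u^2" by simp
  have "exp t / 2 * u^2 = (exp t * u^2) / 2" by simp
  then have "exp t / 2 * u^2 \<le> u^2 * exp \<bar>u\<bar>" using h1 h2 by (simp only: mult.commute[of "u^2"])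
  then show ?thesis unfolding e by simp
qed

lemma sq_le_exp: assumes "0 \<le> (y::real)" shows "y^2 \<le> 2 * exp y"
proof -
  obtain t where t: "\<bar>t\<bar> \<le> \<bar>y\<bar>" "exp y = (\<Sum>m<3. y ^ m / fact m) + exp t / fact 3 * y ^ 3"
    using Maclaurin_exp_le[of y 3] by blast
  have "(\<Sum>m<3. y ^ m / fact m) = 1 + y + y^2/2" by (simp add: numeral_3_eq_3 fact_numeral power2_eq_square)
  moreover have "0 \<le> exp t / fact 3 * y ^ 3" using assms by simp
  ultimately show ?thesis using t(2) assms by simp
qed

lemma gauss_bump_bound:
  assumes b: "0 < (b::real)" and c: "0 \<le> c" and rho: "0 \<le> (\<rho>::real)"
  shows "(1+\<rho>)^2 * exp (c*\<rho> - b*\<rho>^2) \<le> 2 * exp 1 * exp ((c+1)^2 / (4*b))"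
proof -
  have "(1+\<rho>)^2 \<le> 2 * exp (1+\<rho>)" using sq_le_exp[of "1+\<rho>"] rho by simp
  then have "(1+\<rho>)^2 * exp (c*\<rho> - b*\<rho>^2) \<le> 2 * exp (1+\<rho>) * exp (c*\<rho> - b*\<rho>^2)"
    by (simp add: mult_right_mono)
  also have "\<dots> = 2 * exp 1 * exp ((c+1)*\<rho> - b*\<rho>^2)"
    by (simp add: exp_add[symmetric] algebra_simps)
  also have "(c+1)*\<rho> - b*\<rho>^2 \<le> (c+1)^2 / (4*b)"
  proof -
    have "0 \<le> (2*b*\<rho> - (c+1))^2" by simp
    then have "0 \<le> 4*b^2*\<rho>^2 - 4*b*(c+1)*\<rho> + (c+1)^2" by (simp add: power2_eq_square algebra_simps)
    then show ?thesis using b by (simp add: field_simps power2_eq_square)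
  qed
  then have "exp ((c+1)*\<rho> - b*\<rho>^2) \<le> exp ((c+1)^2 / (4*b))" by simp
  then have "2 * exp 1 * exp ((c+1)*\<rho> - b*\<rho>^2) \<le> 2 * exp 1 * exp ((c+1)^2 / (4*b))" by simp
  finally show ?thesis .
qed

lemma aux_shift:
  fixes r s p q w x z hn :: real
  assumes "s \<noteq> 0"
  shows "(2*r*(p+q) - r^2*((x + 2*w + hn) + z))/(2 * s) = (2*r*p - r^2*(x+z))/(2 * s) + ((r/s)*(q - r*w) - (r^2/(2 * s))*hn)"
  using assms by (simp add: field_simps) (simp add: algebra_simps power2_eq_square)

lemma mk_shift:
  fixes x0 h z :: "'a::euclidean_space"
  assumes r: "r^2 < 1"
  shows "mk r (x0 + h) z = mk r x0 z * exp ((r/(1-r^2)) * (h \<bullet> (z - r *\<^sub>R x0)) - (r^2/(2*(1-r^2))) * (norm h)^2)"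
proof -
  have s2: "1 - r^2 \<noteq> 0" using r by simp
  have e1: "(norm (x0 + h))^2 = (norm x0)^2 + 2 * (x0 \<bullet> h) + (norm h)^2"
    by (simp only: power2_norm_eq_inner) (simp add: inner_add_left inner_add_right inner_commute)
  have e2: "(x0+h) \<bullet> z = x0 \<bullet> z + h \<bullet> z" by (simp add: inner_add_left)
  have e3: "h \<bullet> (z - r *\<^sub>R x0) = h \<bullet> z - r * (x0 \<bullet> h)" by (simp add: inner_diff_right inner_commute)
  have "(2*r*((x0+h) \<bullet> z) - r^2*((norm (x0+h))^2 + (norm z)^2)) / (2*(1-r^2)) =
     (2*r*(x0 \<bullet> z) - r^2*((norm x0)^2 + (norm z)^2)) / (2*(1-r^2)) +
     ((r/(1-r^2)) * (h \<bullet> (z - r *\<^sub>R x0)) - (r^2/(2*(1-r^2))) * (norm h)^2)"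
    unfolding e1 e2 e3 by (rule aux_shift[OF s2])
  then show ?thesis unfolding mk_def by (simp add: exp_add)
qed


lemma aux_eq2:
  fixes q r x z :: real
  assumes "q \<noteq> 0"
  shows "(r/q) * x * z - (r^2/(2*q)) * z^2 = (2*r*(x*z) - r^2*z^2)/(2*q)"
  using assms by (simp add: field_simps)

lemma mk_le_bump:
  fixes x0 z :: "'a::euclidean_space"
  assumes r: "0 < r" "r < 1"
  shows "mk r x0 z \<le> (1-r^2) powr (- real DIM('a) / 2) *
     exp ((r/(1-r^2)) * norm x0 * norm z - (r^2/(2*(1-r^2))) * (norm z)^2)"
proof -
  have s2: "0 < 1 - r^2" using r by (simp add: power_less_one_iff abs_square_less_1)
  have "x0 \<bullet> z \<le> norm x0 * norm z" by (rule norm_cauchy_schwarz)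
  then have f1: "2*r*(x0 \<bullet> z) \<le> 2*r*(norm x0 * norm z)" using r by simp
  have f2: "0 \<le> r^2 * (norm x0)^2" by simp
  have num: "2*r*(x0 \<bullet> z) - r^2*((norm x0)^2 + (norm z)^2) \<le> 2*r*(norm x0*norm z) - r^2*(norm z)^2"
    unfolding distrib_left using f1 f2 by linarith
  have eq: "(r/(1-r^2)) * norm x0 * norm z - (r^2/(2*(1-r^2))) * (norm z)^2 = (2*r*(norm x0*norm z) - r^2*(norm z)^2)/(2*(1-r^2))"
    using s2 by (intro aux_eq2) simp
  have "(2*r*(x0 \<bullet> z) - r^2*((norm x0)^2 + (norm z)^2)) / (2*(1-r^2)) \<le>
      (r/(1-r^2)) * norm x0 * norm z - (r^2/(2*(1-r^2))) * (norm z)^2"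
    unfolding eq using s2 num by (intro divide_right_mono) auto
  then show ?thesis unfolding mk_def by (intro mult_left_mono) auto
qed

lemma kernel_rem_bound:
  fixes x0 :: "'a::euclidean_space"
  assumes r: "0 < r" "r < 1"
  shows "\<exists>Cb\<ge>0. \<forall>z h. norm h \<le> 1 \<longrightarrow>
     mk r x0 z * \<bar>exp ((r/(1-r^2)) * (h \<bullet> (z - r *\<^sub>R x0)) - (r^2/(2*(1-r^2))) * (norm h)^2) - 1
        - (r/(1-r^2)) * (h \<bullet> (z - r *\<^sub>R x0))\<bar> \<le> Cb * (norm h)^2"
proof -
  have s2: "0 < 1 - r^2" using r by (simp add: power_less_one_iff abs_square_less_1)
  define a where "a = r/(1-r^2)"
  define b where "b = r^2/(2*(1-r^2))"
  have a: "0 < a" using r s2 by (simp add: a_def)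
  have b: "0 < b" using r s2 by (simp add: b_def)
  define \<kappa> where "\<kappa> = (1-r^2) powr (- real DIM('a) / 2)"
  have \<kappa>: "0 \<le> \<kappa>" by (simp add: \<kappa>_def)
  define c1 where "c1 = a*(1+norm x0) + b"
  have c1: "0 \<le> c1" using a b by (simp add: c1_def)
  define cc where "cc = a*norm x0 + c1"
  have cc: "0 \<le> cc" using a c1 by (simp add: cc_def)
  define Bd where "Bd = 2 * exp 1 * exp ((cc+1)^2 / (4*b))"
  define Cb where "Cb = \<kappa> * (c1^2 * exp c1 + b) * Bd"
  have Cb: "0 \<le> Cb" using \<kappa> b by (simp add: Cb_def Bd_def)
  have bump: "(1+\<rho>)^2 * exp (cc*\<rho> - b*\<rho>^2) \<le> Bd" if "0 \<le> \<rho>" for \<rho>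
    unfolding Bd_def using gauss_bump_bound[OF b cc that] .
  have mkb: "mk r x0 z \<le> \<kappa> * exp (a * norm x0 * norm z - b * (norm z)^2)" for z
    using mk_le_bump[OF r, of x0 z] by (simp add: \<kappa>_def a_def b_def)
  have P: "mk r x0 z * (c1^2*(1+norm z)^2*exp (c1*(1+norm z)) + b) \<le> Cb" for z
  proof -
    let ?\<rho> = "norm z"
    have e1: "exp (a * norm x0 * ?\<rho> - b * ?\<rho>^2) * exp (c1*(1+?\<rho>)) = exp c1 * exp (cc*?\<rho> - b*?\<rho>^2)"
      by (simp add: exp_add[symmetric] cc_def algebra_simps)
    have e2: "exp (a * norm x0 * ?\<rho> - b * ?\<rho>^2) \<le> (1+?\<rho>)^2 * exp (cc*?\<rho> - b*?\<rho>^2)"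
    proof -
      have "exp (a * norm x0 * ?\<rho> - b * ?\<rho>^2) \<le> exp (cc*?\<rho> - b*?\<rho>^2)"
        using c1 by (simp add: cc_def algebra_simps)
      also have "\<dots> \<le> (1+?\<rho>)^2 * exp (cc*?\<rho> - b*?\<rho>^2)"
      proof -
        have "1 \<le> (1+?\<rho>)^2" using mult_mono[of 1 "1+?\<rho>" 1 "1+?\<rho>"] by (simp add: power2_eq_square)
        then show ?thesis by (simp add: mult_right_mono)  
      qed
      finally show ?thesis .
    qed
    have "mk r x0 z * (c1^2*(1+?\<rho>)^2*exp (c1*(1+?\<rho>)) + b)
        \<le> \<kappa> * exp (a * norm x0 * ?\<rho> - b * ?\<rho>^2) * (c1^2*(1+?\<rho>)^2*exp (c1*(1+?\<rho>)) + b)"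
      using mkb[of z] b by (intro mult_right_mono) auto
    also have "\<dots> = \<kappa> * (c1^2 * exp c1 * ((1+?\<rho>)^2 * exp (cc*?\<rho> - b*?\<rho>^2)) + b * exp (a * norm x0 * ?\<rho> - b * ?\<rho>^2))"
      using e1 by (simp add: algebra_simps)
    also have "\<dots> \<le> \<kappa> * (c1^2 * exp c1 * Bd + b * Bd)"
      using bump[of ?\<rho>] e2 b \<kappa> c1 by (intro mult_left_mono add_mono) (auto intro!: mult_left_mono order_trans[OF e2])
    also have "\<dots> = Cb" by (simp add: Cb_def algebra_simps)
    finally show ?thesis .
  qed
  show ?thesis
  proof (intro exI[of _ Cb] conjI allI impI Cb)
    fix z h :: 'a assume h: "norm h \<le> 1"
    define w where "w = a * (h \<bullet> (z - r *\<^sub>R x0))"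
    define u where "u = w - b * (norm h)^2"
    have hh: "(norm h)^2 \<le> norm h" using h by (simp add: power2_eq_square mult_left_le_one_le)
    have wb: "\<bar>w\<bar> \<le> a * norm h * (norm z + norm x0)"
    proof -
      have "\<bar>h \<bullet> (z - r *\<^sub>R x0)\<bar> \<le> norm h * norm (z - r *\<^sub>R x0)" by (rule Cauchy_Schwarz_ineq2)
      also have "norm (z - r *\<^sub>R x0) \<le> norm z + norm x0"
      proof -
        have "\<bar>r\<bar> * norm x0 \<le> norm x0" using r by (intro mult_left_le_one_le) auto
        moreover have "norm (z - r *\<^sub>R x0) \<le> norm z + \<bar>r\<bar> * norm x0" using norm_triangle_ineq4[of z "r *\<^sub>R x0"] by simp
        ultimately show ?thesis by linarith
      qed
      then have "norm h * norm (z - r *\<^sub>R x0) \<le> norm h * (norm z + norm x0)" by (simp add: mult_left_mono)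
      finally show ?thesis using a by (simp add: w_def abs_mult mult.assoc mult_left_mono)
    qed
    have ub: "\<bar>u\<bar> \<le> norm h * (c1 * (1 + norm z))"
    proof -
      have "\<bar>u\<bar> \<le> \<bar>w\<bar> + b * (norm h)^2" using abs_triangle_ineq4[of w "b*(norm h)^2"] b by (simp add: u_def)
      also have "\<dots> \<le> a * norm h * (norm z + norm x0) + b * norm h" using wb hh b by (intro add_mono mult_left_mono) auto
      also have "\<dots> = norm h * (a * norm z + a * norm x0 + b)" by (simp add: algebra_simps)
      also have "\<dots> \<le> norm h * (c1 * (1 + norm z))"
      proof (rule mult_left_mono)
        have "a * norm z \<le> (a*(1+norm x0) + b) * norm z" using a b mult_nonneg_nonneg[of a "norm x0"] by (intro mult_right_mono) (auto simp: algebra_simps)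
        then show "a * norm z + a * norm x0 + b \<le> c1 * (1 + norm z)" using a by (simp add: c1_def algebra_simps)
      qed simp
      finally show ?thesis .
    qed
    have ew: "exp u - 1 - w = (exp u - 1 - u) - b*(norm h)^2" by (simp add: u_def)
    have "\<bar>exp u - 1 - w\<bar> \<le> \<bar>exp u - 1 - u\<bar> + b * (norm h)^2"
      unfolding ew using abs_triangle_ineq4[of "exp u - 1 - u" "b*(norm h)^2"] b by simp
    also have "\<bar>exp u - 1 - u\<bar> \<le> u^2 * exp \<bar>u\<bar>" by (rule exp_rem)
    also have "u^2 * exp \<bar>u\<bar> \<le> (norm h)^2 * (c1^2 * (1 + norm z)^2 * exp (c1 * (1 + norm z)))"
    proof -
      have "u^2 \<le> (norm h * (c1 * (1 + norm z)))^2" using ub by (metis abs_ge_zero power2_abs power_mono)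
      moreover have "exp \<bar>u\<bar> \<le> exp (c1 * (1 + norm z))"
      proof -
        have "norm h * (c1 * (1 + norm z)) \<le> c1 * (1 + norm z)" using h c1 by (intro mult_left_le_one_le) auto
        then show ?thesis using ub by simp
      qed
      ultimately have "u^2 * exp \<bar>u\<bar> \<le> (norm h * (c1 * (1 + norm z)))^2 * exp (c1 * (1 + norm z))"
        by (intro mult_mono) auto
      moreover have "(norm h * (c1 * (1 + norm z)))^2 * exp (c1 * (1 + norm z)) = (norm h)^2 * (c1^2 * (1 + norm z)^2 * exp (c1 * (1 + norm z)))"
        by (simp add: power_mult_distrib mult_ac)
      ultimately show ?thesis by simp
    qed
    finally have "\<bar>exp u - 1 - w\<bar> \<le> (norm h)^2 * (c1^2*(1+norm z)^2*exp (c1*(1+norm z)) + b)"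
      by (simp add: algebra_simps)
    then have "mk r x0 z * \<bar>exp u - 1 - w\<bar> \<le> mk r x0 z * ((norm h)^2 * (c1^2*(1+norm z)^2*exp (c1*(1+norm z)) + b))"
      by (intro mult_left_mono) auto
    also have "\<dots> = (norm h)^2 * (mk r x0 z * (c1^2*(1+norm z)^2*exp (c1*(1+norm z)) + b))" by simp
    also have "\<dots> \<le> (norm h)^2 * Cb" using P[of z] by (intro mult_left_mono) auto
    finally show "mk r x0 z * \<bar>exp ((r/(1-r^2)) * (h \<bullet> (z - r *\<^sub>R x0)) - (r^2/(2*(1-r^2))) * (norm h)^2) - 1
        - (r/(1-r^2)) * (h \<bullet> (z - r *\<^sub>R x0))\<bar> \<le> Cb * (norm h)^2"
      by (simp add: u_def w_def a_def b_def mult.commute)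
  qed
qed


context fctx begin

lemma A_rem:
  assumes r: "0 < r" "r < 1"
  shows "\<exists>Cb\<ge>0. \<forall>h. norm h \<le> 1 \<longrightarrow>
    \<bar>A r (x0+h) - A r x0 - h \<bullet> ((r/(1-r^2)) *\<^sub>R Bv r x0)\<bar> \<le> Cb * (norm h)^2"
proof -
  have r2: "r^2 < 1" using r by (simp add: power_less_one_iff abs_square_less_1)
  have ar: "\<bar>r\<bar> \<le> 1" using r by simp
  obtain Cb where Cb: "Cb \<ge> 0" and CbB: "\<And>z h. norm h \<le> 1 \<Longrightarrow>
     mk r x0 z * \<bar>exp ((r/(1-r^2)) * (h \<bullet> (z - r *\<^sub>R x0)) - (r^2/(2*(1-r^2))) * (norm h)^2) - 1
        - (r/(1-r^2)) * (h \<bullet> (z - r *\<^sub>R x0))\<bar> \<le> Cb * (norm h)^2"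
    using kernel_rem_bound[OF r, of x0] by blast
  show ?thesis
  proof (intro exI[of _ Cb] conjI allI impI Cb)
    fix h :: 'a assume h: "norm h \<le> 1"
    define a where "a = r/(1-r^2)"
    define b where "b = r^2/(2*(1-r^2))"
    define w where "w z = a * (h \<bullet> (z - r *\<^sub>R x0))" for z
    define u where "u z = w z - b * (norm h)^2" for z
    have shift: "mk r (x0 + h) z = mk r x0 z * exp (u z)" for z
      unfolding u_def w_def a_def b_def by (rule mk_shift[OF r2])
    have I1: "integrable std_gaussian (\<lambda>z. f z * (mk r x0 z * exp (u z)))"
      using int_A[OF r2, of "x0+h"] by (simp add: shift)
    have I2: "integrable std_gaussian (\<lambda>z. f z * mk r x0 z)" by (rule int_A[OF r2])
    have IB: "integrable std_gaussian (\<lambda>z. (f z * mk r x0 z) *\<^sub>R (z - r *\<^sub>R x0))" by (rule int_B[OF r2 ar])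
    have I3: "integrable std_gaussian (\<lambda>z. f z * mk r x0 z * w z)"
    proof -
      have "integrable std_gaussian (\<lambda>z. a * (h \<bullet> ((f z * mk r x0 z) *\<^sub>R (z - r *\<^sub>R x0))))"
        using IB by (intro integrable_mult_right integrable_inner_right) auto
      then show ?thesis by (simp add: w_def mult_ac)
    qed
    have eA: "A r (x0+h) = (\<integral>z. f z * (mk r x0 z * exp (u z)) \<partial>std_gaussian)"
      unfolding A_def by (simp add: shift)
    have eV: "h \<bullet> ((r/(1-r^2)) *\<^sub>R Bv r x0) = (\<integral>z. f z * mk r x0 z * w z \<partial>std_gaussian)"
    proof -
      have "h \<bullet> ((r/(1-r^2)) *\<^sub>R Bv r x0) = a * (h \<bullet> Bv r x0)" by (simp add: a_def)
      also have "h \<bullet> Bv r x0 = (\<integral>z. h \<bullet> ((f z * mk r x0 z) *\<^sub>R (z - r *\<^sub>R x0)) \<partial>std_gaussian)"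
        unfolding Bv_def using IB by (rule integral_inner_right[symmetric])
      also have "a * \<dots> = (\<integral>z. a * (h \<bullet> ((f z * mk r x0 z) *\<^sub>R (z - r *\<^sub>R x0))) \<partial>std_gaussian)"
        by simp
      also have "\<dots> = (\<integral>z. f z * mk r x0 z * w z \<partial>std_gaussian)"
        by (simp add: w_def mult_ac)
      finally show ?thesis .
    qed
    have eq: "A r (x0+h) - A r x0 - h \<bullet> ((r/(1-r^2)) *\<^sub>R Bv r x0)
        = (\<integral>z. f z * mk r x0 z * (exp (u z) - 1 - w z) \<partial>std_gaussian)"
    proof -
      have "A r (x0+h) - A r x0 - h \<bullet> ((r/(1-r^2)) *\<^sub>R Bv r x0) =
          (\<integral>z. f z * (mk r x0 z * exp (u z)) - f z * mk r x0 z - f z * mk r x0 z * w z \<partial>std_gaussian)"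
        unfolding eA eV A_def using I1 I2 I3 by (simp add: shift)
      also have "\<dots> = (\<integral>z. f z * mk r x0 z * (exp (u z) - 1 - w z) \<partial>std_gaussian)"
        by (simp add: algebra_simps)
      finally show ?thesis .
    qed
    have IR: "integrable std_gaussian (\<lambda>z. f z * mk r x0 z * (exp (u z) - 1 - w z))"
    proof -
      have "integrable std_gaussian (\<lambda>z. f z * (mk r x0 z * exp (u z)) - f z * mk r x0 z - f z * mk r x0 z * w z)"
        using I1 I2 I3 by auto
      then show ?thesis by (simp add: algebra_simps)
    qed
    have "norm (A r (x0+h) - A r x0 - h \<bullet> ((r/(1-r^2)) *\<^sub>R Bv r x0))
        \<le> (\<integral>z. Cb * (norm h)^2 * f z \<partial>std_gaussian)"
      unfolding eq
    proof (rule Bochner_Integration.integral_norm_bound_integral[OF IR])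
      show "integrable std_gaussian (\<lambda>z. Cb * (norm h)^2 * f z)" using f_int by simp
      fix z
      have "norm (f z * mk r x0 z * (exp (u z) - 1 - w z)) = f z * (mk r x0 z * \<bar>exp (u z) - 1 - w z\<bar>)"
        using f_nonneg[of z] by (simp add: abs_mult)
      also have "\<dots> \<le> f z * (Cb * (norm h)^2)"
        using CbB[OF h, of z] f_nonneg[of z] by (intro mult_left_mono) (auto simp: u_def w_def a_def b_def)
      finally show "norm (f z * mk r x0 z * (exp (u z) - 1 - w z)) \<le> Cb * (norm h)^2 * f z"
        by (simp add: mult_ac)
    qed
    also have "\<dots> = Cb * (norm h)^2" using f_one by simp
    finally show "\<bar>A r (x0+h) - A r x0 - h \<bullet> ((r/(1-r^2)) *\<^sub>R Bv r x0)\<bar> \<le> Cb * (norm h)^2" by simp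
  qed
qed

lemma A_deriv:
  assumes r: "0 < r" "r < 1"
  shows "(A r has_derivative (\<lambda>h. h \<bullet> ((r/(1-r^2)) *\<^sub>R Bv r x0))) (at x0)"
proof -
  obtain Cb where Cb: "Cb \<ge> 0" and CbB: "\<And>h. norm h \<le> 1 \<Longrightarrow>
    \<bar>A r (x0+h) - A r x0 - h \<bullet> ((r/(1-r^2)) *\<^sub>R Bv r x0)\<bar> \<le> Cb * (norm h)^2"
    using A_rem[OF r, of x0] by blast
  show ?thesis unfolding has_derivative_at_alt
  proof (intro conjI allI impI bounded_linear_inner_left)
    fix e :: real assume e: "0 < e"
    define d where "d = min 1 (e / (Cb + 1))"
    have d: "0 < d" using e Cb by (simp add: d_def)
    show "\<exists>d>0. \<forall>y. norm (y - x0) < d \<longrightarrow> norm (A r y - A r x0 - (y - x0) \<bullet> ((r/(1-r^2)) *\<^sub>R Bv r x0)) \<le> e * norm (y - x0)"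
    proof (intro exI[of _ d] conjI allI impI d)
      fix y assume y: "norm (y - x0) < d"
      define h where "h = y - x0"
      have h1: "norm h \<le> 1" using y by (simp add: h_def d_def)
      have yh: "y = x0 + h" by (simp add: h_def)
      have "norm (A r y - A r x0 - (y - x0) \<bullet> ((r/(1-r^2)) *\<^sub>R Bv r x0)) \<le> Cb * (norm h)^2"
        using CbB[OF h1] by (simp add: yh)
      also have "\<dots> = (Cb * norm h) * norm h" by (simp add: power2_eq_square)
      also have "\<dots> \<le> e * norm h"
      proof (rule mult_right_mono)
        have "norm h < e / (Cb + 1)" using y by (simp add: h_def d_def)
        then have "(Cb + 1) * norm h \<le> e" using Cb by (simp add: field_simps)
        then show "Cb * norm h \<le> e" by (simp add: algebra_simps) (smt (verit) norm_ge_zero)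
      qed simp
      finally show "norm (A r y - A r x0 - (y - x0) \<bullet> ((r/(1-r^2)) *\<^sub>R Bv r x0)) \<le> e * norm (y - x0)"
        by (simp add: h_def)
    qed
  qed
qed

end


lemma sf_std_gaussian: "sigma_finite_measure std_gaussian"
  by (rule prob_space_imp_sigma_finite[OF prob_space_std_gaussian])

context fctx begin

lemma A_meas[measurable]: "A r \<in> borel_measurable borel"
  unfolding A_def[abs_def] by (rule sigma_finite_measure.borel_measurable_lebesgue_integral[OF sf_std_gaussian]) measurable

lemma Bv_meas[measurable]: "Bv r \<in> borel_measurable borel"
  unfolding Bv_def[abs_def] by (rule sigma_finite_measure.borel_measurable_lebesgue_integral[OF sf_std_gaussian]) measurable

lemma Cq_meas[measurable]: "Cq r \<in> borel_measurable borel"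
  unfolding Cq_def[abs_def] by (rule sigma_finite_measure.borel_measurable_lebesgue_integral[OF sf_std_gaussian]) measurable

lemma grad_A:
  assumes r: "0 < r" "r < 1"
  shows "grad (A r) x = (r/(1-r^2)) *\<^sub>R Bv r x"
proof -
  define V where "V = (r/(1-r^2)) *\<^sub>R Bv r x"
  have fd: "frechet_derivative (A r) (at x) = (\<lambda>h. h \<bullet> V)"
    unfolding V_def using frechet_derivative_at[OF A_deriv[OF r, of x]] by (rule sym)
  have "grad (A r) x = (\<Sum>b\<in>Basis. (V \<bullet> b) *\<^sub>R b)" unfolding grad_def fd by (intro sum.cong refl) (rule arg_cong[where f="\<lambda>a. a *\<^sub>R _"], rule inner_commute)
  also have "\<dots> = V" by (rule euclidean_representation)
  finally show ?thesis by (simp add: V_def)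
qed

definition gq :: "real \<Rightarrow> 'a \<Rightarrow> real" where
  "gq r x = (norm (Bv r x))^2 / ((1-r^2)^2 * A r x)"

lemma gq_meas[measurable]: "gq r \<in> borel_measurable borel"
  unfolding gq_def[abs_def] by measurable

lemma fisher_eq:
  assumes t: "0 < t"
  shows "ennreal (exp (2*t)) * fisher (OU t f) = (\<integral>\<^sup>+x. ennreal (gq (exp (-t)) x) \<partial>std_gaussian)"
proof -
  define r where "r = exp (-t)"
  have r: "0 < r" "r < 1" using t by (auto simp: r_def)
  have OU: "OU t f = A r" using OU_eq[OF t] by (auto simp: r_def)
  have er: "exp (2*t) * r^2 = 1" by (simp add: r_def power2_eq_square exp_add[symmetric])
  have "ennreal (exp (2*t)) * fisher (OU t f) = ennreal (exp (2*t)) * (\<integral>\<^sup>+x. ennreal ((norm ((r/(1-r^2)) *\<^sub>R Bv r x))^2 / A r x) \<partial>std_gaussian)"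
    unfolding fisher_def OU using grad_A[OF r] by simp
  also have "\<dots> = (\<integral>\<^sup>+x. ennreal (exp (2*t)) * ennreal ((norm ((r/(1-r^2)) *\<^sub>R Bv r x))^2 / A r x) \<partial>std_gaussian)"
    by (rule nn_integral_cmult[symmetric]) measurable
  also have "\<dots> = (\<integral>\<^sup>+x. ennreal (gq r x) \<partial>std_gaussian)"
  proof (intro nn_integral_cong)
    fix x
    have "exp (2*t) * ((norm ((r/(1-r^2)) *\<^sub>R Bv r x))^2 / A r x) = (exp (2*t) * r^2) * ((norm (Bv r x))^2 / ((1-r^2)^2 * A r x))"
      using r by (simp add: power_mult_distrib power_divide)
    also have "\<dots> = gq r x" by (simp add: er gq_def)
    finally show "ennreal (exp (2*t)) * ennreal ((norm ((r/(1-r^2)) *\<^sub>R Bv r x))^2 / A r x) = ennreal (gq r x)"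
      by (simp add: ennreal_mult'[symmetric])
  qed
  finally show ?thesis by (simp add: r_def)
qed

lemma quad_nonneg:
  assumes r: "0 < r" "r < 1"
  shows "0 \<le> Cq r x - 2 * (c \<bullet> Bv r x) + (norm c)^2 * A r x"
proof -
  have r2: "r^2 < 1" using r by (simp add: power_less_one_iff abs_square_less_1)
  have ar: "\<bar>r\<bar> \<le> 1" using r by simp
  have IA: "integrable std_gaussian (\<lambda>z. f z * mk r x z)" by (rule int_A[OF r2])
  have IB: "integrable std_gaussian (\<lambda>z. (f z * mk r x z) *\<^sub>R (z - r *\<^sub>R x))" by (rule int_B[OF r2 ar])
  have IC: "integrable std_gaussian (\<lambda>z. f z * mk r x z * (norm (z - r *\<^sub>R x))^2)" by (rule int_C[OF r2 ar])
  have IB0: "integrable std_gaussian (\<lambda>z. c \<bullet> ((f z * mk r x z) *\<^sub>R (z - r *\<^sub>R x)))"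
    by (rule integrable_inner_right) (rule IB)
  then have IB': "integrable std_gaussian (\<lambda>z. f z * mk r x z * (c \<bullet> (z - r *\<^sub>R x)))" by simp
  have "Cq r x - 2 * (c \<bullet> Bv r x) + (norm c)^2 * A r x =
     (\<integral>z. f z * mk r x z * (norm (z - r *\<^sub>R x))^2 - 2 * (c \<bullet> ((f z * mk r x z) *\<^sub>R (z - r *\<^sub>R x))) + (norm c)^2 * (f z * mk r x z) \<partial>std_gaussian)"
    unfolding Cq_def Bv_def A_def using IA IB IC IB' by (simp add: integral_inner_right[symmetric])
  also have "\<dots> = (\<integral>z. f z * mk r x z * (norm ((z - r *\<^sub>R x) - c))^2 \<partial>std_gaussian)"
  proof (intro Bochner_Integration.integral_cong refl)
    fix z
    have e: "(norm ((z - r *\<^sub>R x) - c))^2 = (norm (z - r *\<^sub>R x))^2 - 2 * (c \<bullet> (z - r *\<^sub>R x)) + (norm c)^2"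
      by (simp only: power2_norm_eq_inner) (simp add: inner_diff_left inner_diff_right inner_commute)
    show "f z * mk r x z * (norm (z - r *\<^sub>R x))^2 - 2 * (c \<bullet> ((f z * mk r x z) *\<^sub>R (z - r *\<^sub>R x))) + (norm c)^2 * (f z * mk r x z)
        = f z * mk r x z * (norm ((z - r *\<^sub>R x) - c))^2"
      unfolding e by (simp only: inner_scaleR_right) (simp add: algebra_simps)
  qed
  also have "0 \<le> \<dots>" by (intro integral_nonneg_AE AE_I2) (simp add: f_nonneg)
  finally show ?thesis by simp
qed

lemma A_nonneg: "0 \<le> A r x"
  unfolding A_def by (intro integral_nonneg_AE AE_I2) (simp add: f_nonneg)

lemma Cq_nonneg: "0 \<le> Cq r x"
  unfolding Cq_def by (intro integral_nonneg_AE AE_I2) (simp add: f_nonneg)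

lemma aux_cs:
  fixes C n a :: real
  assumes "a \<noteq> 0"
  shows "C - 2 * (n / a) + n / a^2 * a = C - n / a"
  using assms by (simp add: power2_eq_square)

lemma cauchy_schwarz_B:
  assumes r: "0 < r" "r < 1"
  shows "(norm (Bv r x))^2 \<le> A r x * Cq r x"
proof (cases "A r x = 0")
  case True
  show ?thesis
  proof (rule ccontr)
    assume "\<not> ?thesis"
    then have B: "0 < (norm (Bv r x))^2" using True by simp
    define t where "t = (Cq r x + 1) / (2 * (norm (Bv r x))^2)"
    have "0 \<le> Cq r x - 2 * ((t *\<^sub>R Bv r x) \<bullet> Bv r x) + (norm (t *\<^sub>R Bv r x))^2 * A r x"
      by (rule quad_nonneg[OF r])
    also have "\<dots> = Cq r x - 2 * t * (norm (Bv r x))^2" using True by (simp add: power2_norm_eq_inner)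
    also have "\<dots> = -1" using B by (simp add: t_def) (simp add: field_simps)
    finally show False by simp
  qed
next
  case False
  then have A: "0 < A r x" using A_nonneg[of r x] by simp
  define c where "c = (1 / A r x) *\<^sub>R Bv r x"
  have cB: "c \<bullet> Bv r x = (norm (Bv r x))^2 / A r x"
    by (simp add: c_def power2_norm_eq_inner)
  have nc: "(norm c)^2 = (norm (Bv r x))^2 / (A r x)^2"
    using A by (simp add: c_def power_divide power_mult_distrib)
  have "0 \<le> Cq r x - 2 * (c \<bullet> Bv r x) + (norm c)^2 * A r x"
    by (rule quad_nonneg[OF r])
  also have "\<dots> = Cq r x - (norm (Bv r x))^2 / A r x"
    unfolding cB nc using A by (intro aux_cs) simp
  finally have "(norm (Bv r x))^2 / A r x \<le> Cq r x" by simp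
  then show ?thesis using A by (simp add: pos_divide_le_eq mult.commute)
qed

definition Dq :: "real \<Rightarrow> 'a \<Rightarrow> real" where
  "Dq r x = Cq r x / (1-r^2)^2"

lemma gq_le_Dq:
  assumes r: "0 < r" "r < 1"
  shows "gq r x \<le> Dq r x"
proof (cases "A r x = 0")
  case True then show ?thesis by (simp add: gq_def Dq_def Cq_nonneg)
next
  case False
  then have A: "0 < A r x" using A_nonneg[of r x] by simp
  have r2: "r^2 < 1" using r by (simp add: power_less_one_iff abs_square_less_1)
  have s2: "0 < (1-r^2)^2" using r2 by simp
  have "(norm (Bv r x))^2 / A r x \<le> Cq r x" using cauchy_schwarz_B[OF r, of x] A by (simp add: pos_divide_le_eq mult.commute)
  then have "(norm (Bv r x))^2 / A r x / (1-r^2)^2 \<le> Cq r x / (1-r^2)^2"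
    using s2 by (intro divide_right_mono) auto
  then show ?thesis unfolding gq_def Dq_def by (simp add: divide_divide_eq_left mult.commute)
qed

lemma gq_nonneg: "0 \<le> gq r x"
  unfolding gq_def using A_nonneg[of r x] by simp

end


lemma mk_bound2:
  fixes x z :: "'a::euclidean_space"
  assumes r: "0 \<le> r" "r \<le> 1/2"
  shows "mk r x z \<le> (3/4) powr (- real DIM('a) / 2) * exp ((norm x)^2 / 2)"
proof -
  have r2: "r^2 \<le> 1/4" using power_mono[OF r(2) r(1), of 2] by (simp add: power_divide)
  then have r21: "r^2 < 1" by simp
  have "mk r x z \<le> (1-r^2) powr (- real DIM('a) / 2) * exp ((norm x)^2 / 2)" by (rule mk_bound[OF r21])
  also have "(1-r^2) powr (- real DIM('a) / 2) \<le> (3/4) powr (- real DIM('a) / 2)"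
    using r2 by (intro powr_mono2') auto
  finally show ?thesis by (simp add: mult_right_mono)
qed

lemma mk_tendsto:
  fixes x z :: "'a::euclidean_space"
  assumes rs: "rs \<longlonglongrightarrow> 0"
  shows "(\<lambda>n. mk (rs n) x z) \<longlonglongrightarrow> 1"
proof -
  have "(\<lambda>n. mk (rs n) x z) \<longlonglongrightarrow> mk 0 x z"
    unfolding mk_def by (intro tendsto_intros rs) auto
  then show ?thesis by (simp add: mk_def)
qed

context fctx begin

definition M2 :: real where "M2 = (\<integral>z. (norm z)^2 * f z \<partial>std_gaussian)"

lemma lim_A:
  assumes rs: "rs \<longlonglongrightarrow> 0" and r: "\<And>n. 0 < rs n \<and> rs n \<le> 1/2"
  shows "(\<lambda>n. A (rs n) x) \<longlonglongrightarrow> 1"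
proof -
  let ?K = "(3/4) powr (- real DIM('a) / 2) * exp ((norm x)^2 / 2)"
  have "(\<lambda>n. \<integral>z. f z * mk (rs n) x z \<partial>std_gaussian) \<longlonglongrightarrow> (\<integral>z. f z \<partial>std_gaussian)"
  proof (rule integral_dominated_convergence[where w="\<lambda>z. ?K * f z"])
    show "integrable std_gaussian (\<lambda>z. ?K * f z)" using f_int by simp
    show "AE z in std_gaussian. (\<lambda>n. f z * mk (rs n) x z) \<longlonglongrightarrow> f z"
      using mk_tendsto[OF rs] by (intro AE_I2) (auto intro!: tendsto_eq_intros)
    fix n
    show "AE z in std_gaussian. norm (f z * mk (rs n) x z) \<le> ?K * f z"
      using mk_bound2[of "rs n" x] r[of n] f_nonneg by (intro AE_I2) (auto simp: mult.commute intro!: mult_left_mono)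
  qed measurable
  then show ?thesis by (simp add: A_def f_one)
qed

lemma lim_B:
  assumes rs: "rs \<longlonglongrightarrow> 0" and r: "\<And>n. 0 < rs n \<and> rs n \<le> 1/2"
  shows "(\<lambda>n. Bv (rs n) x) \<longlonglongrightarrow> 0"
proof -
  let ?K = "(3/4) powr (- real DIM('a) / 2) * exp ((norm x)^2 / 2)"
  have "(\<lambda>n. \<integral>z. (f z * mk (rs n) x z) *\<^sub>R (z - rs n *\<^sub>R x) \<partial>std_gaussian) \<longlonglongrightarrow> (\<integral>z. f z *\<^sub>R z \<partial>std_gaussian)"
  proof (rule integral_dominated_convergence[where w="\<lambda>z. ?K * (f z * norm z + norm x * f z)"])
    show "integrable std_gaussian (\<lambda>z. ?K * (f z * norm z + norm x * f z))" using f_int fabs_int by simp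
    show "AE z in std_gaussian. (\<lambda>n. (f z * mk (rs n) x z) *\<^sub>R (z - rs n *\<^sub>R x)) \<longlonglongrightarrow> f z *\<^sub>R z"
      using mk_tendsto[OF rs] rs by (intro AE_I2) (auto intro!: tendsto_eq_intros)
    fix n
    show "AE z in std_gaussian. norm ((f z * mk (rs n) x z) *\<^sub>R (z - rs n *\<^sub>R x)) \<le> ?K * (f z * norm z + norm x * f z)"
    proof (intro AE_I2)
      fix z
      have rn: "0 < rs n" "rs n \<le> 1/2" using r[of n] by auto
      have n: "norm (z - rs n *\<^sub>R x) \<le> norm z + norm x"
      proof -
        have "\<bar>rs n\<bar> * norm x \<le> norm x" using rn by (intro mult_left_le_one_le) auto
        moreover have "norm (z - rs n *\<^sub>R x) \<le> norm z + \<bar>rs n\<bar> * norm x" using norm_triangle_ineq4[of z "rs n *\<^sub>R x"] by simp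
        ultimately show ?thesis by linarith
      qed
      have "norm ((f z * mk (rs n) x z) *\<^sub>R (z - rs n *\<^sub>R x)) = f z * mk (rs n) x z * norm (z - rs n *\<^sub>R x)"
        using f_nonneg by simp
      also have "\<dots> \<le> f z * ?K * (norm z + norm x)"
        using mk_bound2[of "rs n" x z] rn f_nonneg n by (intro mult_mono mult_left_mono) auto
      finally show "norm ((f z * mk (rs n) x z) *\<^sub>R (z - rs n *\<^sub>R x)) \<le> ?K * (f z * norm z + norm x * f z)"
        by (simp add: algebra_simps)
    qed
  qed measurable
  then show ?thesis by (simp add: Bv_def f_mean)
qed

lemma lim_C:
  assumes rs: "rs \<longlonglongrightarrow> 0" and r: "\<And>n. 0 < rs n \<and> rs n \<le> 1/2"
  shows "(\<lambda>n. Cq (rs n) x) \<longlonglongrightarrow> M2"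
proof -
  let ?K = "(3/4) powr (- real DIM('a) / 2) * exp ((norm x)^2 / 2)"
  have "(\<lambda>n. \<integral>z. f z * mk (rs n) x z * (norm (z - rs n *\<^sub>R x))^2 \<partial>std_gaussian) \<longlonglongrightarrow> (\<integral>z. (norm z)^2 * f z \<partial>std_gaussian)"
  proof (rule integral_dominated_convergence[where w="\<lambda>z. ?K * (2 * ((norm z)^2 * f z) + 2 * (norm x)^2 * f z)"])
    show "integrable std_gaussian (\<lambda>z. ?K * (2 * ((norm z)^2 * f z) + 2 * (norm x)^2 * f z))" using f_int f_sec by simp
    show "AE z in std_gaussian. (\<lambda>n. f z * mk (rs n) x z * (norm (z - rs n *\<^sub>R x))^2) \<longlonglongrightarrow> (norm z)^2 * f z"
      using mk_tendsto[OF rs] rs by (intro AE_I2) (auto intro!: tendsto_eq_intros)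
    fix n
    show "AE z in std_gaussian. norm (f z * mk (rs n) x z * (norm (z - rs n *\<^sub>R x))^2) \<le> ?K * (2 * ((norm z)^2 * f z) + 2 * (norm x)^2 * f z)"
    proof (intro AE_I2)
      fix z
      have rn: "0 < rs n" "rs n \<le> 1/2" using r[of n] by auto
      have n: "norm (z - rs n *\<^sub>R x) \<le> norm z + norm x"
      proof -
        have "\<bar>rs n\<bar> * norm x \<le> norm x" using rn by (intro mult_left_le_one_le) auto
        moreover have "norm (z - rs n *\<^sub>R x) \<le> norm z + \<bar>rs n\<bar> * norm x" using norm_triangle_ineq4[of z "rs n *\<^sub>R x"] by simp
        ultimately show ?thesis by linarith
      qed
      have n2: "(norm (z - rs n *\<^sub>R x))^2 \<le> 2 * (norm z)^2 + 2 * (norm x)^2"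
      proof -
        have "(norm (z - rs n *\<^sub>R x))^2 \<le> (norm z + norm x)^2" using n by (intro power_mono) auto
        also have "\<dots> \<le> 2 * (norm z)^2 + 2 * (norm x)^2"
          using power2_sum[of "norm z" "norm x"] power2_diff[of "norm z" "norm x"] zero_le_power2[of "norm z - norm x"] by linarith
        finally show ?thesis .
      qed
      have "norm (f z * mk (rs n) x z * (norm (z - rs n *\<^sub>R x))^2) = f z * mk (rs n) x z * (norm (z - rs n *\<^sub>R x))^2"
        using f_nonneg by simp
      also have "\<dots> \<le> f z * ?K * (2 * (norm z)^2 + 2 * (norm x)^2)"
        using mk_bound2[of "rs n" x z] rn f_nonneg n2 by (intro mult_mono mult_left_mono) auto
      finally show "norm (f z * mk (rs n) x z * (norm (z - rs n *\<^sub>R x))^2) \<le> ?K * (2 * ((norm z)^2 * f z) + 2 * (norm x)^2 * f z)"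
        by (simp add: algebra_simps)
    qed
  qed measurable
  then show ?thesis by (simp add: Cq_def M2_def)
qed

lemma lim_D:
  assumes rs: "rs \<longlonglongrightarrow> 0" and r: "\<And>n. 0 < rs n \<and> rs n \<le> 1/2"
  shows "(\<lambda>n. Dq (rs n) x) \<longlonglongrightarrow> M2"
proof -
  have "(\<lambda>n. Cq (rs n) x / (1 - (rs n)^2)^2) \<longlonglongrightarrow> M2 / (1 - 0^2)^2"
    by (intro tendsto_intros lim_C[OF rs r] rs) auto
  then show ?thesis by (simp add: Dq_def)
qed

lemma lim_g:
  assumes rs: "rs \<longlonglongrightarrow> 0" and r: "\<And>n. 0 < rs n \<and> rs n \<le> 1/2"
  shows "(\<lambda>n. gq (rs n) x) \<longlonglongrightarrow> 0"
proof -
  have "(\<lambda>n. (norm (Bv (rs n) x))^2 / ((1 - (rs n)^2)^2 * A (rs n) x)) \<longlonglongrightarrow> (norm (0::'a))^2 / ((1 - 0^2)^2 * 1)"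
    by (intro tendsto_intros lim_A[OF rs r] lim_B[OF rs r] rs) auto
  then show ?thesis by (simp add: gq_def)
qed

end


lemma psf_std_gaussian: "pair_sigma_finite std_gaussian std_gaussian"
  unfolding pair_sigma_finite_def by (intro conjI sf_std_gaussian)

lemma inner_gauss_bound:
  fixes z :: "'a::euclidean_space"
  assumes r: "0 < r" "r < 1"
  shows "(\<integral>\<^sup>+x. ennreal (mk r z x * (norm (z - r *\<^sub>R x))^2) \<partial>std_gaussian)
     \<le> ennreal ((1+r)*(1-r^2)^2*(norm z)^2 + (r+r^2)*(1-r^2)*real DIM('a))"
proof -
  have s2: "0 < 1 - r^2" using r by (simp add: power_less_one_iff abs_square_less_1)
  define s where "s = sqrt (1 - r^2)"
  have s: "0 < s" "s^2 = 1 - r^2" using s2 by (auto simp: s_def)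
  define a where "a = (1+r)*(1-r^2)^2*(norm z)^2"
  define b where "b = (r+r^2)*(1-r^2)"
  have a: "0 \<le> a" using r s2 by (simp add: a_def)
  have b: "0 \<le> b" using r s2 by (simp add: b_def)
  have "(\<integral>\<^sup>+x. ennreal (mk r z x * (norm (z - r *\<^sub>R x))^2) \<partial>std_gaussian)
      = (\<integral>\<^sup>+x. ennreal (mk r z x) * ennreal ((norm (z - r *\<^sub>R x))^2) \<partial>std_gaussian)"
    by (simp add: ennreal_mult)
  also have "\<dots> = (\<integral>\<^sup>+y. ennreal ((norm (z - r *\<^sub>R (r *\<^sub>R z + s *\<^sub>R y)))^2) \<partial>std_gaussian)"
    unfolding s_def by (rule mehler_nn[OF r, symmetric]) measurable
  also have "\<dots> \<le> (\<integral>\<^sup>+y. ennreal a + ennreal b * ennreal ((norm (y::'a))^2) \<partial>std_gaussian)"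
  proof (intro nn_integral_mono)
    fix y :: 'a
    have e: "z - r *\<^sub>R (r *\<^sub>R z + s *\<^sub>R y) = (1 - r^2) *\<^sub>R z - (r * s) *\<^sub>R y"
      by (simp add: algebra_simps power2_eq_square)
    define p where "p = (1 - r^2) * norm z"
    define q where "q = r * s * norm y"
    have p: "0 \<le> p" using s2 by (simp add: p_def)
    have q: "0 \<le> q" using r s by (simp add: q_def)
    have "norm (z - r *\<^sub>R (r *\<^sub>R z + s *\<^sub>R y)) \<le> p + q"
      unfolding e p_def q_def using norm_triangle_ineq4[of "(1 - r^2) *\<^sub>R z" "(r * s) *\<^sub>R y"] s2 r s
      by (simp add: abs_mult)
    then have "(norm (z - r *\<^sub>R (r *\<^sub>R z + s *\<^sub>R y)))^2 \<le> (p + q)^2" by (intro power_mono) auto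
    also have "\<dots> \<le> (1+r) * p^2 + (1 + 1/r) * q^2"
    proof -
      have "0 \<le> (r*p - q)^2" by simp
      then have "2*p*q \<le> r * p^2 + q^2 / r" using r by (simp add: field_simps power2_eq_square)
      then show ?thesis by (simp add: power2_sum algebra_simps)
    qed
    also have "\<dots> = a + b * (norm y)^2"
    proof -
      have q2: "q^2 = r^2*(1-r^2)*(norm y)^2" by (simp add: q_def power_mult_distrib s(2))
      have p2: "p^2 = (1-r^2)^2*(norm z)^2" by (simp add: p_def power_mult_distrib)
      show ?thesis unfolding q2 p2 a_def b_def using r by (simp add: field_simps power2_eq_square)
    qed
    finally have le: "(norm (z - r *\<^sub>R (r *\<^sub>R z + s *\<^sub>R y)))^2 \<le> a + b * (norm y)^2" .
    have "ennreal (a + b * (norm y)^2) = ennreal a + ennreal (b * (norm y)^2)" using a b by (intro ennreal_plus) auto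
    also have "ennreal (b * (norm y)^2) = ennreal b * ennreal ((norm y)^2)" using b by (intro ennreal_mult) auto
    finally have eq: "ennreal (a + b * (norm y)^2) = ennreal a + ennreal b * ennreal ((norm y)^2)" .
    show "ennreal ((norm (z - r *\<^sub>R (r *\<^sub>R z + s *\<^sub>R y)))^2) \<le> ennreal a + ennreal b * ennreal ((norm y)^2)"
      unfolding eq[symmetric] using le by (rule ennreal_leI)
  qed
  also have "\<dots> = ennreal a + ennreal b * of_nat DIM('a)"
    by (subst nn_integral_add) (auto simp: nn_integral_cmult nn_gauss_second emeasure_std_gaussian_UNIV)
  also have "\<dots> = ennreal (a + b * real DIM('a))"
  proof -
    have "ennreal (a + b * real DIM('a)) = ennreal a + ennreal (b * real DIM('a))" using a b by (intro ennreal_plus) auto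
    also have "ennreal (b * real DIM('a)) = ennreal b * ennreal (real DIM('a))" using b by (intro ennreal_mult) auto
    finally show ?thesis by (simp add: ennreal_of_nat_eq_real_of_nat)
  qed
  finally show ?thesis by (simp add: a_def b_def)
qed


lemma aux_q:
  fixes q X M Y N :: real
  assumes "q \<noteq> 0"
  shows "1/q^2 * (X*q^2 * M + Y*q*N) = X*M + Y*N/q"
  using assms by (simp add: field_simps power2_eq_square)

context fctx begin

lemma int_Dq_bound:
  assumes r: "0 < r" "r < 1"
  shows "(\<integral>\<^sup>+x. ennreal (Dq r x) \<partial>std_gaussian) \<le> ennreal ((1+r)*M2 + (r+r^2)*real DIM('a)/(1-r^2))"
proof -
  have r2: "r^2 < 1" using r by (simp add: power_less_one_iff abs_square_less_1)
  have ar: "\<bar>r\<bar> \<le> 1" using r by simp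
  have s2: "0 < 1 - r^2" using r2 by simp
  define P where "P z = (1+r)*(1-r^2)^2*(norm z)^2 + (r+r^2)*(1-r^2)*real DIM('a)" for z :: 'a
  have P: "0 \<le> P z" for z using r s2 by (simp add: P_def)
  define F where "F x z = ennreal (f z * mk r x z * (norm (z - r *\<^sub>R x))^2)" for x z :: 'a
  have Fm: "case_prod F \<in> borel_measurable (std_gaussian \<Otimes>\<^sub>M std_gaussian)"
    unfolding F_def mk_def by measurable
  have "(\<integral>\<^sup>+x. ennreal (Cq r x) \<partial>std_gaussian) = (\<integral>\<^sup>+x. (\<integral>\<^sup>+z. F x z \<partial>std_gaussian) \<partial>std_gaussian)"
  proof (intro nn_integral_cong)
    fix x
    show "ennreal (Cq r x) = (\<integral>\<^sup>+z. F x z \<partial>std_gaussian)"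
      unfolding Cq_def F_def
      by (rule nn_integral_eq_integral[symmetric]) (auto intro: int_C[OF r2 ar] simp: f_nonneg)
  qed
  also have "\<dots> = (\<integral>\<^sup>+z. (\<integral>\<^sup>+x. F x z \<partial>std_gaussian) \<partial>std_gaussian)"
    by (rule pair_sigma_finite.Fubini'[OF psf_std_gaussian Fm, symmetric])
  also have "\<dots> \<le> (\<integral>\<^sup>+z. ennreal (f z * P z) \<partial>std_gaussian)"
  proof (intro nn_integral_mono)
    fix z :: 'a
    have "(\<integral>\<^sup>+x. F x z \<partial>std_gaussian) = (\<integral>\<^sup>+x. ennreal (f z) * ennreal (mk r z x * (norm (z - r *\<^sub>R x))^2) \<partial>std_gaussian)"
      unfolding F_def by (intro nn_integral_cong) (simp add: ennreal_mult[symmetric] f_nonneg mk_sym[of r _ z] mult.assoc)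
    also have "\<dots> = ennreal (f z) * (\<integral>\<^sup>+x. ennreal (mk r z x * (norm (z - r *\<^sub>R x))^2) \<partial>std_gaussian)"
      by (rule nn_integral_cmult) measurable
    also have "\<dots> \<le> ennreal (f z) * ennreal (P z)"
      unfolding P_def by (intro mult_left_mono inner_gauss_bound[OF r]) auto
    also have "\<dots> = ennreal (f z * P z)" using P f_nonneg by (simp add: ennreal_mult)
    finally show "(\<integral>\<^sup>+x. F x z \<partial>std_gaussian) \<le> ennreal (f z * P z)" .
  qed
  also have "\<dots> = ennreal (\<integral>z. f z * P z \<partial>std_gaussian)"
  proof (rule nn_integral_eq_integral)
    have "integrable std_gaussian (\<lambda>z. (1+r)*(1-r^2)^2 * ((norm z)^2 * f z) + ((r+r^2)*(1-r^2)*real DIM('a)) * f z)"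
      using f_int f_sec by auto
    then show "integrable std_gaussian (\<lambda>z. f z * P z)" by (simp add: P_def algebra_simps)
  qed (auto simp: f_nonneg P)
  also have "(\<integral>z. f z * P z \<partial>std_gaussian) = (1+r)*(1-r^2)^2 * M2 + ((r+r^2)*(1-r^2)*real DIM('a))"
  proof -
    have "(\<integral>z. f z * P z \<partial>std_gaussian) = (\<integral>z. (1+r)*(1-r^2)^2 * ((norm z)^2 * f z) + ((r+r^2)*(1-r^2)*real DIM('a)) * f z \<partial>std_gaussian)"
      by (simp add: P_def algebra_simps)
    also have "\<dots> = (1+r)*(1-r^2)^2 * M2 + ((r+r^2)*(1-r^2)*real DIM('a)) * 1"
      using f_int f_sec by (simp add: M2_def f_one)
    finally show ?thesis by simp
  qed
  finally have IC: "(\<integral>\<^sup>+x. ennreal (Cq r x) \<partial>std_gaussian) \<le> ennreal ((1+r)*(1-r^2)^2 * M2 + (r+r^2)*(1-r^2)*real DIM('a))" .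
  have "(\<integral>\<^sup>+x. ennreal (Dq r x) \<partial>std_gaussian) = (\<integral>\<^sup>+x. ennreal (1/(1-r^2)^2) * ennreal (Cq r x) \<partial>std_gaussian)"
    unfolding Dq_def by (intro nn_integral_cong) (simp add: ennreal_mult[symmetric] Cq_nonneg)
  also have "\<dots> = ennreal (1/(1-r^2)^2) * (\<integral>\<^sup>+x. ennreal (Cq r x) \<partial>std_gaussian)"
    by (rule nn_integral_cmult) measurable
  also have "\<dots> \<le> ennreal (1/(1-r^2)^2) * ennreal ((1+r)*(1-r^2)^2 * M2 + (r+r^2)*(1-r^2)*real DIM('a))"
    by (intro mult_left_mono IC) auto
  also have "\<dots> = ennreal ((1+r)*M2 + (r+r^2)*real DIM('a)/(1-r^2))"
  proof -
    have "1/(1-r^2)^2 * ((1+r)*(1-r^2)^2 * M2 + (r+r^2)*(1-r^2)*real DIM('a)) = (1+r)*M2 + (r+r^2)*real DIM('a)/(1-r^2)"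
      using s2 aux_q[of "1-r^2" "1+r" M2 "r+r^2" "real DIM('a)"] by simp
    then show ?thesis by (subst ennreal_mult'[symmetric]) simp_all
  qed
  finally show ?thesis .
qed

end


lemma Liminf_le_frequently:
  fixes X :: "nat \<Rightarrow> 'b::complete_linorder"
  assumes "\<exists>\<^sub>F n in sequentially. X n \<le> c"
  shows "liminf X \<le> c"
  unfolding Liminf_def
proof (rule SUP_least)
  fix P assume "P \<in> {P. eventually P sequentially}"
  then have "eventually P sequentially" by simp
  from frequently_eventually_conj[OF assms this] obtain n where "P n" "X n \<le> c"
    using frequently_ex by blast
  then show "(INF n\<in>Collect P. X n) \<le> c" by (meson INF_lower2 mem_Collect_eq)
qed

context fctx begin

lemma Dq_meas[measurable]: "Dq r \<in> borel_measurable borel"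
  unfolding Dq_def[abs_def] by measurable

lemma M2_nonneg: "0 \<le> M2"
  unfolding M2_def by (intro integral_nonneg_AE AE_I2) (simp add: f_nonneg)

lemma main_seq:
  assumes rs: "rs \<longlonglongrightarrow> 0" and r: "\<And>n. 0 < rs n \<and> rs n \<le> 1/2"
  shows "(\<lambda>n. \<integral>\<^sup>+x. ennreal (gq (rs n) x) \<partial>std_gaussian) \<longlonglongrightarrow> 0"
proof -
  have r1: "0 < rs n" "rs n < 1" for n using r[of n] by auto
  define I where "I n = (\<integral>\<^sup>+x. ennreal (gq (rs n) x) \<partial>std_gaussian)" for n
  define U where "U n = (1 + rs n)*M2 + (rs n + (rs n)^2)*real DIM('a)/(1-(rs n)^2)" for n
  have U: "U \<longlonglongrightarrow> (1 + 0)*M2 + (0 + 0^2)*real DIM('a)/(1-0^2)"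
    unfolding U_def by (intro tendsto_intros rs) auto
  then have U': "U \<longlonglongrightarrow> M2" by simp
  define u where "u n x = ennreal (Dq (rs n) x + 1 - gq (rs n) x)" for n x
  have um[measurable]: "u n \<in> borel_measurable std_gaussian" for n
    unfolding u_def by measurable
  have lim_u: "liminf (\<lambda>n. u n x) = ennreal (M2 + 1)" for x
  proof -
    have "(\<lambda>n. Dq (rs n) x + 1 - gq (rs n) x) \<longlonglongrightarrow> M2 + 1 - 0"
      by (intro tendsto_intros lim_D[OF rs r] lim_g[OF rs r])
    then have "(\<lambda>n. u n x) \<longlonglongrightarrow> ennreal (M2 + 1)"
      unfolding u_def by (intro tendsto_ennrealI) simp
    then show ?thesis by (rule lim_imp_Liminf[OF trivial_limit_sequentially])
  qed
  have fatou: "ennreal (M2 + 1) \<le> liminf (\<lambda>n. \<integral>\<^sup>+x. u n x \<partial>std_gaussian)"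
  proof -
    have "(\<integral>\<^sup>+x. liminf (\<lambda>n. u n x) \<partial>std_gaussian) = ennreal (M2 + 1)"
      by (simp add: lim_u emeasure_std_gaussian_UNIV)
    moreover have "(\<integral>\<^sup>+x. liminf (\<lambda>n. u n x) \<partial>std_gaussian) \<le> liminf (\<lambda>n. \<integral>\<^sup>+x. u n x \<partial>std_gaussian)"
      by (rule nn_integral_liminf) measurable
    ultimately show ?thesis by simp
  qed
  have sumb: "(\<integral>\<^sup>+x. u n x \<partial>std_gaussian) + I n \<le> ennreal (U n + 1)" for n
  proof -
    have "(\<integral>\<^sup>+x. u n x \<partial>std_gaussian) + I n = (\<integral>\<^sup>+x. u n x + ennreal (gq (rs n) x) \<partial>std_gaussian)"
      unfolding I_def by (rule nn_integral_add[symmetric]) measurable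
    also have "\<dots> = (\<integral>\<^sup>+x. ennreal (Dq (rs n) x) + 1 \<partial>std_gaussian)"
    proof (intro nn_integral_cong)
      fix x
      have g: "0 \<le> gq (rs n) x" "gq (rs n) x \<le> Dq (rs n) x" using gq_nonneg gq_le_Dq[OF r1] by auto
      then have "u n x + ennreal (gq (rs n) x) = ennreal (Dq (rs n) x + 1 - gq (rs n) x + gq (rs n) x)"
        unfolding u_def by (subst ennreal_plus) auto
      also have "\<dots> = ennreal (Dq (rs n) x) + 1" using g by (simp add: ennreal_plus)
      finally show "u n x + ennreal (gq (rs n) x) = ennreal (Dq (rs n) x) + 1" .
    qed
    also have "\<dots> = (\<integral>\<^sup>+x. ennreal (Dq (rs n) x) \<partial>std_gaussian) + 1"
      by (subst nn_integral_add) (auto simp: emeasure_std_gaussian_UNIV)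
    also have "\<dots> \<le> ennreal (U n) + 1"
      unfolding U_def by (intro add_right_mono int_Dq_bound r1)
    also have "\<dots> = ennreal (U n + 1)"
    proof -
      have "0 \<le> U n" unfolding U_def using r1[of n] M2_nonneg
        by (intro add_nonneg_nonneg mult_nonneg_nonneg divide_nonneg_nonneg) (auto simp: power_less_one_iff abs_square_less_1 less_imp_le)
      then show ?thesis by (simp add: ennreal_plus)
    qed
    finally show ?thesis .
  qed
  show ?thesis
  proof (rule ccontr)
    assume nt: "\<not> (\<lambda>n. \<integral>\<^sup>+x. ennreal (gq (rs n) x) \<partial>std_gaussian) \<longlonglongrightarrow> 0"
    have "\<not> I \<longlonglongrightarrow> 0" using nt by (simp add: I_def[abs_def])
    then obtain e :: ennreal where e: "0 < e" and ne: "\<not> eventually (\<lambda>n. I n < e) sequentially"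
      unfolding order_tendsto_iff by auto
    define \<epsilon> where "\<epsilon> = (if e = \<infinity> then 1 else min 1 (enn2real e))"
    have eps: "0 < \<epsilon>" "ennreal \<epsilon> \<le> e" "\<epsilon> \<le> 1"
    proof -
      show "0 < \<epsilon>" "\<epsilon> \<le> 1" using e by (auto simp: \<epsilon>_def enn2real_positive_iff less_top[symmetric])
      show "ennreal \<epsilon> \<le> e"
      proof (cases "e = \<infinity>")
        case False
        then have "ennreal (min 1 (enn2real e)) \<le> ennreal (enn2real e)" by (intro ennreal_leI) auto
        also have "\<dots> = e" using False by (simp add: ennreal_enn2real_if)
        finally show ?thesis using False by (simp add: \<epsilon>_def)
      qed (simp add: \<epsilon>_def)
    qed
    have freq: "\<exists>\<^sub>F n in sequentially. ennreal \<epsilon> \<le> I n"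
      unfolding frequently_def
    proof
      assume "\<forall>\<^sub>F n in sequentially. \<not> ennreal \<epsilon> \<le> I n"
      then have "\<forall>\<^sub>F n in sequentially. I n < e"
        by (rule eventually_mono) (use eps(2) in \<open>auto simp: not_le intro: order.strict_trans2\<close>)
      with ne show False by simp
    qed
    have evU: "eventually (\<lambda>n. U n < M2 + \<epsilon>/2) sequentially"
      using U' eps(1) unfolding order_tendsto_iff by auto
    have "\<exists>\<^sub>F n in sequentially. (\<integral>\<^sup>+x. u n x \<partial>std_gaussian) \<le> ennreal (M2 + 1 - \<epsilon>/2)"
    proof -
      have "\<exists>\<^sub>F n in sequentially. U n < M2 + \<epsilon>/2 \<and> ennreal \<epsilon> \<le> I n"
        by (rule frequently_eventually_conj[OF freq evU])
      then show ?thesis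
      proof (rule frequently_elim1)
        fix n assume n: "U n < M2 + \<epsilon>/2 \<and> ennreal \<epsilon> \<le> I n"
        have "(\<integral>\<^sup>+x. u n x \<partial>std_gaussian) + ennreal \<epsilon> \<le> (\<integral>\<^sup>+x. u n x \<partial>std_gaussian) + I n"
          using n by (intro add_left_mono) auto
        also have "\<dots> \<le> ennreal (U n + 1)" by (rule sumb)
        also have "\<dots> \<le> ennreal (M2 + 1 - \<epsilon>/2 + \<epsilon>)" using n by (intro ennreal_leI) auto
        also have "\<dots> = ennreal (M2 + 1 - \<epsilon>/2) + ennreal \<epsilon>"
          using eps M2_nonneg by (intro ennreal_plus) auto
        finally show "(\<integral>\<^sup>+x. u n x \<partial>std_gaussian) \<le> ennreal (M2 + 1 - \<epsilon>/2)"
          by (simp add: ennreal_add_left_cancel_le add.commute)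
      qed
    qed
    then have "liminf (\<lambda>n. \<integral>\<^sup>+x. u n x \<partial>std_gaussian) \<le> ennreal (M2 + 1 - \<epsilon>/2)"
      by (rule Liminf_le_frequently)
    with fatou have "ennreal (M2 + 1) \<le> ennreal (M2 + 1 - \<epsilon>/2)" by (rule order_trans)
    then have "M2 + 1 \<le> M2 + 1 - \<epsilon>/2" by (subst (asm) ennreal_le_iff) (use eps M2_nonneg in auto)
    then show False using eps by simp
  qed
qed

end


context fctx begin

lemma main_limit: "((\<lambda>t. ennreal (exp (2 * t)) * fisher (OU t f)) \<longlongrightarrow> 0) at_top"
proof (rule tendsto_at_topI_sequentially)
  fix X :: "nat \<Rightarrow> real" assume X: "filterlim X at_top sequentially"
  have e0: "((\<lambda>x. exp (- x)) \<longlongrightarrow> (0::real)) at_top"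
    using filterlim_compose[OF exp_at_bot filterlim_uminus_at_bot_at_top] by (simp add: o_def)
  have eX: "(\<lambda>n. exp (- X n)) \<longlonglongrightarrow> 0" by (rule filterlim_compose[OF e0 X])
  have evX: "eventually (\<lambda>n. ln 2 < X n) sequentially"
    using X by (simp add: filterlim_at_top_dense)
  define rs where "rs n = (if ln 2 < X n then exp (- X n) else 1/2)" for n
  have ev_eq: "eventually (\<lambda>n. rs n = exp (- X n)) sequentially"
    using evX by eventually_elim (simp add: rs_def)
  have rs0: "rs \<longlonglongrightarrow> 0" using eX ev_eq by (simp add: tendsto_cong)
  have rsb: "0 < rs n \<and> rs n \<le> 1/2" for n
  proof (cases "ln 2 < X n")
    case True
    then have "exp (- X n) < exp (- ln 2)" by simp
    then show ?thesis using True by (simp add: rs_def exp_minus)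
  qed (simp add: rs_def)
  have "(\<lambda>n. \<integral>\<^sup>+x. ennreal (gq (rs n) x) \<partial>std_gaussian) \<longlonglongrightarrow> 0"
    by (rule main_seq[OF rs0 rsb])
  moreover have "eventually (\<lambda>n. (\<integral>\<^sup>+x. ennreal (gq (rs n) x) \<partial>std_gaussian) = ennreal (exp (2 * X n)) * fisher (OU (X n) f)) sequentially"
    using evX
  proof eventually_elim
    case (elim n)
    have "0 < X n" using elim ln_gt_zero[of 2] by linarith
    then show ?case using fisher_eq[of "X n"] elim by (simp add: rs_def)
  qed
  ultimately show "(\<lambda>n. ennreal (exp (2 * X n)) * fisher (OU (X n) f)) \<longlonglongrightarrow> 0"
    by (simp add: tendsto_cong)
qed

end

theorem corollary5p2:
  fixes f :: "'a::euclidean_space \<Rightarrow> real"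
  assumes smooth: "smooth_fun f"
    and nonneg: "\<And>x. f x \<ge> 0"
    and prob: "integrable std_gaussian f" "(\<integral>x. f x \<partial>std_gaussian) = 1"
    and mean: "integrable std_gaussian (\<lambda>x. f x *\<^sub>R x)"
              "(\<integral>x. f x *\<^sub>R x \<partial>std_gaussian) = 0"
    and second: "integrable std_gaussian (\<lambda>x. (norm x)\<^sup>2 * f x)"
    and fin: "fisher f < \<infinity>"
  shows "((\<lambda>t. ennreal (exp (2 * t)) * fisher (OU t f)) \<longlongrightarrow> 0) at_top"
proof -
  have "Ck 0 f" using smooth unfolding smooth_fun_def by blast
  then have meas: "f \<in> borel_measurable borel" by (simp add: borel_measurable_continuous_onI)
  interpret fctx f
    by (unfold_locales) (use meas nonneg prob mean second in auto)
  show ?thesis by (rule main_limit)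
qed


end
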